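(* There exist absolute constants $0<c_1\le c_2$ and $c_3>0$ such that for every integer $N>20$ there is a weight $w\in A_1(\mathbb{R})$ satisfying: (1) $\int_0^1 w(x)\,dx=1$; (2) $c_1N\le [w]_{A_1}\le c_2N$; (3) $|\{x\in(1,\infty): w(x)>x\}|\ge c_3N^2$.
   Context: A weight $w\ge0$ on $\mathbb{R}$ is in $A_1$ if there is $C>0$ with $\frac1{|I|}\int_Iw\le C\operatorname{ess\,inf}_Iw$ for every interval $I$; $[w]_{A_1}$ is the smallest such $C$. $|E|$ is Lebesgue measure. *)

theory Defs
  imports "HOL-Analysis.Analysis"
begin

text \<open>Average of w over the interval [a,b] is at most C times the essential infimum of w
  on [a,b]; the latter is expressed as: the average is at most C * w x for almost every x in [a,b].\<close>
definition A1_bound :: "(real \<Rightarrow> real) \<Rightarrow> real \<Rightarrow> bool" where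
  "A1_bound w C \<longleftrightarrow>
     (\<forall>a b. a < b \<longrightarrow>
        set_integrable lborel {a..b} w \<and>
        (AE x in lborel. x \<in> {a..b} \<longrightarrow>
           (1 / (b - a)) * (LINT x:{a..b}|lborel. w x) \<le> C * w x))"

definition A1_weight :: "(real \<Rightarrow> real) \<Rightarrow> bool" where
  "A1_weight w \<longleftrightarrow> w \<in> borel_measurable lborel \<and> (\<forall>x. 0 \<le> w x) \<and> (\<exists>C>0. A1_bound w C)"

definition A1_const :: "(real \<Rightarrow> real) \<Rightarrow> real" where
  "A1_const w = Inf {C. C > 0 \<and> A1_bound w C}"

end

theory Submission
  imports Defs
begin


definition bd :: "real \<Rightarrow> real \<Rightarrow> real \<Rightarrow> real" where
  "bd p N y = max 0 (max (p - y) (y - p - N))"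

definition bphi :: "real \<Rightarrow> real \<Rightarrow> real \<Rightarrow> real \<Rightarrow> real" where
  "bphi H p N y = max 1 (H / (1 + 8 * bd p N y))"

lemma bd_nonneg: "0 \<le> bd p N y" by (simp add: bd_def)

lemma bphi_cont: "continuous_on S (bphi H p N)"
  unfolding bphi_def bd_def
  by (intro continuous_intros) (auto simp: max_def)

lemma bphi_ge1: "1 \<le> bphi H p N y" by (simp add: bphi_def)

lemma bphi_int: "bphi H p N integrable_on {a..b}"
  by (rule integrable_continuous_interval[OF bphi_cont])

lemma bphi_anti:
  assumes "bd p N x \<le> bd p N y" "0 \<le> H"
  shows "bphi H p N y \<le> bphi H p N x"
proof -
  have "H / (1 + 8 * bd p N y) \<le> H / (1 + 8 * bd p N x)"
    using assms bd_nonneg[of p N x] by (intro divide_left_mono) auto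
  then show ?thesis unfolding bphi_def by linarith
qed

lemma bd_quasiconvex:
  assumes "a \<le> x" "x \<le> b" "0 \<le> N"
  shows "bd p N x \<le> max (bd p N a) (bd p N b)"
  using assms unfolding bd_def by (auto simp: max_def)

lemma bphi_unimodal:
  assumes "a \<le> x" "x \<le> b" "0 \<le> N" "0 \<le> H"
  shows "min (bphi H p N a) (bphi H p N b) \<le> bphi H p N x"
proof (cases "bd p N a \<le> bd p N b")
  case True
  then have "bd p N x \<le> bd p N b" using bd_quasiconvex[OF assms(1-3), of p] by simp
  then show ?thesis using bphi_anti[OF _ assms(4)] by (meson min.coboundedI2)
next
  case False
  then have "bd p N x \<le> bd p N a" using bd_quasiconvex[OF assms(1-3), of p] by simp
  then show ?thesis using bphi_anti[OF _ assms(4)] by (meson min.coboundedI1)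
qed

lemma bphi_symm: "bphi H p N (2*p + N - y) = bphi H p N y"
  unfolding bphi_def bd_def by (simp add: algebra_simps max.commute)

lemma bphi_one_left:
  assumes "y \<le> p - (H - 1) / 8" shows "bphi H p N y = 1"
proof -
  have "p - y \<le> bd p N y" by (simp add: bd_def)
  then have "H \<le> 1 + 8 * bd p N y" using assms by (simp add: field_simps)
  then have "H / (1 + 8 * bd p N y) \<le> 1"
    using bd_nonneg[of p N y] by (simp add: divide_le_eq)
  then show ?thesis unfolding bphi_def by simp
qed

lemma bphi_one_right:
  assumes "p + N + (H - 1) / 8 \<le> y" shows "bphi H p N y = 1"
proof -
  have "y - p - N \<le> bd p N y" by (simp add: bd_def)
  then have "H \<le> 1 + 8 * bd p N y" using assms by (simp add: field_simps)
  then have "H / (1 + 8 * bd p N y) \<le> 1"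
    using bd_nonneg[of p N y] by (simp add: divide_le_eq)
  then show ?thesis unfolding bphi_def by simp
qed

lemma bphi_left_val:
  assumes "p - (H - 1) / 8 \<le> y" "y \<le> p" "0 \<le> N"
  shows "bphi H p N y = H / (1 + 8 * (p - y))"
proof -
  have d: "bd p N y = p - y" using assms unfolding bd_def by auto
  have "1 \<le> H / (1 + 8 * (p - y))" using assms by (subst le_divide_eq) (auto simp: field_simps)
  then show ?thesis unfolding bphi_def d by simp
qed

lemma bphi_right_val:
  assumes "y \<le> p + N + (H - 1) / 8" "p + N \<le> y" "0 \<le> N"
  shows "bphi H p N y = H / (1 + 8 * (y - p - N))"
proof -
  have d: "bd p N y = y - p - N" using assms unfolding bd_def by auto
  have "1 \<le> H / (1 + 8 * (y - p - N))" using assms by (subst le_divide_eq) (auto simp: field_simps)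
  then show ?thesis unfolding bphi_def d by simp
qed

lemma bphi_mid_val:
  assumes "p \<le> y" "y \<le> p + N" "1 \<le> H"
  shows "bphi H p N y = H"
proof -
  have d: "bd p N y = 0" using assms unfolding bd_def by auto
  show ?thesis unfolding bphi_def d using assms by simp
qed

lemma bphi_le_H: "1 \<le> H \<Longrightarrow> bphi H p N y \<le> H"
  unfolding bphi_def using bd_nonneg[of p N y]
  by (auto simp: divide_le_eq intro!: mult_left_le)

lemma int_left:
  assumes "p - (H - 1) / 8 \<le> a" "a \<le> b" "b \<le> p" "0 \<le> N" "1 \<le> H"
  shows "integral {a..b} (bphi H p N) = H / 8 * (ln (1 + 8 * (p - a)) - ln (1 + 8 * (p - b)))"
proof -
  let ?F = "\<lambda>s. - (H / 8) * ln (1 + 8 * (p - s))"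
  have "((\<lambda>s. H / (1 + 8 * (p - s))) has_integral (?F b - ?F a)) {a..b}"
  proof (rule fundamental_theorem_of_calculus[OF assms(2)])
    fix x assume x: "x \<in> {a..b}"
    then have pos: "0 < 1 + 8 * (p - x)" using assms by auto
    show "(?F has_vector_derivative H / (1 + 8 * (p - x))) (at x within {a..b})"
      unfolding has_real_derivative_iff_has_vector_derivative[symmetric]
      by (rule derivative_eq_intros refl | use pos in force)+ (use pos in \<open>simp add: field_simps\<close>)
  qed
  then have "(bphi H p N has_integral (?F b - ?F a)) {a..b}"
    by (rule has_integral_eq[rotated]) (use assms bphi_left_val in auto)
  then have "integral {a..b} (bphi H p N) = ?F b - ?F a" by (rule integral_unique)
  then show ?thesis by (simp add: algebra_simps)
qed

lemma int_right:
  assumes "p + N \<le> a" "a \<le> b" "b \<le> p + N + (H - 1) / 8" "0 \<le> N" "1 \<le> H"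
  shows "integral {a..b} (bphi H p N) = H / 8 * (ln (1 + 8 * (b - p - N)) - ln (1 + 8 * (a - p - N)))"
proof -
  let ?F = "\<lambda>s. (H / 8) * ln (1 + 8 * (s - p - N))"
  have "((\<lambda>s. H / (1 + 8 * (s - p - N))) has_integral (?F b - ?F a)) {a..b}"
  proof (rule fundamental_theorem_of_calculus[OF assms(2)])
    fix x assume x: "x \<in> {a..b}"
    then have pos: "0 < 1 + 8 * (x - p - N)" using assms by auto
    show "(?F has_vector_derivative H / (1 + 8 * (x - p - N))) (at x within {a..b})"
      unfolding has_real_derivative_iff_has_vector_derivative[symmetric]
      by (rule derivative_eq_intros refl | use pos in force)+ (use pos in \<open>simp add: field_simps\<close>)
  qed
  then have "(bphi H p N has_integral (?F b - ?F a)) {a..b}"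
    by (rule has_integral_eq[rotated]) (use assms bphi_right_val in auto)
  then have "integral {a..b} (bphi H p N) = ?F b - ?F a" by (rule integral_unique)
  then show ?thesis by (simp add: algebra_simps)
qed

lemma int_mid:
  assumes "p \<le> a" "a \<le> b" "b \<le> p + N" "1 \<le> H"
  shows "integral {a..b} (bphi H p N) = H * (b - a)"
proof -
  have "integral {a..b} (bphi H p N) = integral {a..b} (\<lambda>_. H)"
    by (rule integral_cong) (use assms bphi_mid_val in auto)
  then show ?thesis using assms by simp
qed

lemma ineq1:
  fixes A B H N :: real
  assumes "1 \<le> B" "B \<le> A" "A \<le> H" "ln H \<le> 4 * N" "1 \<le> N"
  shows "A * (ln A - ln B) \<le> 20 * N * (A - B)"
proof -
  have "ln (A / B) \<le> A / B - 1" using assms by (intro ln_le_minus_one) auto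
  then have "B * ln (A / B) \<le> B * (A / B - 1)" using assms by (intro mult_left_mono) auto
  also have "\<dots> = A - B" using assms by (simp add: field_simps)
  finally have 1: "B * (ln A - ln B) \<le> A - B" using assms by (simp add: ln_div)
  have lnA: "ln A \<le> 4 * N" using assms by (meson ln_le_cancel_iff order_trans less_le_trans zero_less_one)
  have lnB: "0 \<le> ln B" using assms by simp
  have 2: "(A - B) * (ln A - ln B) \<le> (A - B) * (4 * N)"
  proof (rule mult_left_mono)
    show "ln A - ln B \<le> 4 * N" using lnA lnB by linarith
  qed (use assms in auto)
  have "A * (ln A - ln B) = B * (ln A - ln B) + (A - B) * (ln A - ln B)" by (simp add: algebra_simps)
  also have "\<dots> \<le> (A - B) + (A - B) * (4 * N)" using 1 2 by linarith
  also have "\<dots> \<le> 20 * N * (A - B)" using mult_left_mono[of "1+4*N" "20*N" "A-B"] assms by (simp add: algebra_simps)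
  finally show ?thesis .
qed

lemma ineq2:
  fixes u :: real assumes "0 \<le> u"
  shows "(1 + 8 * u) * ln (1 + 8 * u) / 8 \<le> u * (1 + ln (1 + 8 * u))"
proof -
  have "ln (1 + 8 * u) \<le> 8 * u" using assms by (intro ln_add_one_self_le_self) auto
  then show ?thesis by (simp add: algebra_simps)
qed

lemma LB_core:
  assumes N1: "1 \<le> N" and H1: "1 \<le> H" and lnH: "ln H \<le> 4 * N"
    and a1: "p - (H - 1) / 8 \<le> a" and a2: "a < p" and ab: "a < b"
    and b: "b \<le> p + N + (H - 1) / 8"
  shows "integral {a..b} (bphi H p N) \<le> 20 * N * (b - a) * bphi H p N a"
proof -
  define u where "u = p - a"
  define A where "A = 1 + 8 * u"
  have u: "0 < u" using a2 u_def by simp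
  have A1: "1 \<le> A" using u A_def by simp
  have AH: "A \<le> H" using a1 unfolding A_def u_def by (simp add: field_simps)
  have phia: "bphi H p N a = H / A"
    using bphi_left_val[of p H a N] a1 a2 N1 unfolding A_def u_def by simp
  have lnA: "ln A \<le> 4 * N" using A1 AH lnH
    by (meson ln_le_cancel_iff order_trans less_le_trans zero_less_one)
  have lnA0: "0 \<le> ln A" using A1 by simp
  have HA: "0 \<le> H / A" using H1 A1 by simp
  have key: "integral {a..b} (bphi H p N) \<le> H / A * (20 * N * (b - a))"
  proof -
    consider (c1) "b \<le> p" | (c2) "p < b" "b \<le> p + N" | (c3) "p + N < b" by linarith
    then show ?thesis
    proof cases
      case c1
      define B where "B = 1 + 8 * (p - b)"
      have B1: "1 \<le> B" using c1 B_def by simp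
      have BA: "B \<le> A" using ab unfolding A_def B_def u_def by simp
      have I0: "integral {a..b} (bphi H p N) = H / 8 * (ln A - ln B)"
        using int_left[of p H a b N] a1 ab c1 N1 H1 unfolding A_def B_def u_def
        by simp
      have I: "integral {a..b} (bphi H p N) = H / A * (A * (ln A - ln B) / 8)"
        using I0 A1 by simp
      have h2: "A - B = 8 * (b - a)" unfolding A_def B_def u_def by simp
      have X: "A * (ln A - ln B) \<le> 20 * N * (8 * (b - a))" using ineq1[OF B1 BA AH lnH N1] unfolding h2 .
      have "A * (ln A - ln B) / 8 \<le> 20 * N * (8 * (b - a)) / 8" using X by (intro divide_right_mono) auto
      moreover have eq: "20 * N * (8 * (b - a)) / 8 = 20 * N * (b - a)" by simp
      ultimately have "A * (ln A - ln B) / 8 \<le> 20 * N * (b - a)" by linarith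
      then show ?thesis unfolding I by (intro mult_left_mono HA)
    next
      case c2
      have "integral {a..p} (bphi H p N) + integral {p..b} (bphi H p N) = integral {a..b} (bphi H p N)"
        using a2 c2 by (intro Henstock_Kurzweil_Integration.integral_combine bphi_int) auto
      moreover have "integral {a..p} (bphi H p N) = H / 8 * ln A"
        using int_left[of p H a p N] a1 a2 N1 H1 unfolding A_def u_def by simp
      moreover have "integral {p..b} (bphi H p N) = H * (b - p)"
        using int_mid[of p p b N H] c2 H1 by simp
      ultimately have I0: "integral {a..b} (bphi H p N) = H / 8 * ln A + H * (b - p)"
        by linarith
      have I: "integral {a..b} (bphi H p N) = H / A * (A * ln A / 8 + A * (b - p))"
        unfolding I0 using A1 by (simp add: field_simps)
      have "A * ln A / 8 \<le> u * (1 + ln A)" using ineq2[of u] u unfolding A_def by simp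
      moreover have "u * ln A \<le> u * (4 * N)" using lnA u by (intro mult_left_mono) auto
      moreover have "u * (b - p) \<le> u * N" using c2 u by (intro mult_left_mono) auto
      moreover have "A * (b - p) = (b - p) + 8 * (u * (b - p))" unfolding A_def by (simp add: algebra_simps)
      moreover have "b - a = u + (b - p)" unfolding u_def by simp
      moreover have "u * (1 + 12 * N) \<le> u * (20 * N)" using u N1 by (intro mult_left_mono) auto
      moreover have "(b - p) \<le> (b - p) * (20 * N)" using c2 N1 by simp
      ultimately have "A * ln A / 8 + A * (b - p) \<le> 20 * N * (b - a)"
        by (simp add: algebra_simps) 
      then show ?thesis unfolding I by (intro mult_left_mono HA)
    next
      case c3
      have "integral {a..p} (bphi H p N) + integral {p..b} (bphi H p N) = integral {a..b} (bphi H p N)"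
        using a2 c3 N1 by (intro Henstock_Kurzweil_Integration.integral_combine bphi_int) auto
      moreover have "integral {p..p+N} (bphi H p N) + integral {p+N..b} (bphi H p N) = integral {p..b} (bphi H p N)"
        using c3 N1 by (intro Henstock_Kurzweil_Integration.integral_combine bphi_int) auto
      moreover have "integral {a..p} (bphi H p N) = H / 8 * ln A"
        using int_left[of p H a p N] a1 a2 N1 H1 unfolding A_def u_def by simp
      moreover have "integral {p..p+N} (bphi H p N) = H * N"
        using int_mid[of p p "p+N" N H] N1 H1 by simp
      moreover have "integral {p+N..b} (bphi H p N) = H / 8 * ln (1 + 8 * (b - p - N))"
        using int_right[of p N "p+N" b H] c3 b N1 H1 by simp
      ultimately have I0: "integral {a..b} (bphi H p N) = H / 8 * ln A + H * N + H / 8 * ln (1 + 8 * (b - p - N))"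
        by linarith
      have I: "integral {a..b} (bphi H p N) = H / A * (A * ln A / 8 + A * N + A * ln (1 + 8 * (b - p - N)) / 8)"
        unfolding I0 using A1 by (simp add: field_simps)
      define C where "C = 1 + 8 * (b - p - N)"
      have C1: "1 \<le> C" using c3 C_def by simp
      have CH: "C \<le> H" using b C_def by (simp add: field_simps)
      have lnC: "ln C \<le> 4 * N" using C1 CH lnH
        by (meson ln_le_cancel_iff order_trans less_le_trans zero_less_one)
      have f1: "A * ln A / 8 \<le> u + u * ln A" using ineq2[of u] u unfolding A_def by (simp add: algebra_simps)
      have f2: "u * ln A \<le> 4 * (u * N)" using mult_left_mono[OF lnA, of u] u by simp
      have f3: "A * ln C \<le> 4 * (A * N)" using mult_left_mono[OF lnC, of A] A1 by simp
      have f4: "A * N = N + 8 * (u * N)" unfolding A_def by (simp add: algebra_simps)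
      have f5: "20 * N * (b - a) = 20 * (u * N) + 20 * (N * (b - p))" unfolding u_def by (simp add: algebra_simps)
      have f6: "u \<le> 4 * (u * N)" using mult_left_mono[OF N1, of u] u by simp
      have f7: "2 * N \<le> 20 * (N * (b - p))"
      proof -
        have "N * 1 \<le> N * (b - p)" using c3 N1 by (intro mult_left_mono) auto
        then show ?thesis using N1 by simp
      qed
      have "A * ln A / 8 + A * N + A * ln C / 8 \<le> 20 * N * (b - a)"
        using f1 f2 f3 f4 f5 f6 f7 N1 by linarith
      then show ?thesis unfolding I C_def by (intro mult_left_mono HA)
    qed
  qed
  then show ?thesis unfolding phia by (simp add: algebra_simps)
qed

lemma LB_mid:
  assumes N1: "1 \<le> N" and H1: "1 \<le> H" and lnH: "ln H \<le> 4 * N"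
    and a1: "p - (H - 1) / 8 \<le> a" and a2: "a < p" and ab: "a < b"
  shows "integral {a..b} (bphi H p N) \<le> 20 * N * (b - a) * bphi H p N a"
proof (cases "b \<le> p + N + (H - 1) / 8")
  case True then show ?thesis using LB_core assms by blast
next
  case False
  define R where "R = p + N + (H - 1) / 8"
  have "0 \<le> (H - 1) / 8" using H1 by simp
  then have aR: "a < R" using a2 N1 R_def by linarith
  have bR: "R < b" using False R_def by simp
  have "integral {a..R} (bphi H p N) + integral {R..b} (bphi H p N) = integral {a..b} (bphi H p N)"
    using aR bR by (intro Henstock_Kurzweil_Integration.integral_combine bphi_int) auto
  moreover have "integral {a..R} (bphi H p N) \<le> 20 * N * (R - a) * bphi H p N a"
    using LB_core[OF N1 H1 lnH a1 a2 aR] R_def by simp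
  moreover have "integral {R..b} (bphi H p N) = b - R"
  proof -
    have "integral {R..b} (bphi H p N) = integral {R..b} (\<lambda>_. 1)"
      by (rule integral_cong) (use bphi_one_right R_def in auto)
    then show ?thesis using bR by simp
  qed
  moreover have "b - R \<le> 20 * N * (b - R) * bphi H p N a"
  proof -
    have "1 \<le> 20 * N * bphi H p N a" using N1 bphi_ge1[of H p N a]
      by (metis mult_mono' mult_numeral_1 one_le_numeral order_trans zero_le_one mult_1)
    then have "(b - R) * 1 \<le> (b - R) * (20 * N * bphi H p N a)" using bR by (intro mult_left_mono) auto
    then show ?thesis by (simp add: algebra_simps)
  qed
  ultimately show ?thesis by (simp add: algebra_simps)
qed

lemma LB_all:
  assumes N1: "1 \<le> N" and H1': "1 < H" and lnH: "ln H \<le> 4 * N" and ab: "a < b"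
  shows "integral {a..b} (bphi H p N) \<le> 20 * N * (b - a) * bphi H p N a"
proof -
  have H1: "1 \<le> H" using H1' by simp
  have C1: "1 \<le> 20 * N" using N1 by simp
  have Cb: "(b - a) * c \<le> 20 * N * (b - a) * c" if "0 \<le> c" for c
  proof -
    have "(b - a) * c * 1 \<le> (b - a) * c * (20 * N)" using C1 ab that by (intro mult_left_mono) auto
    then show ?thesis by (simp add: algebra_simps)
  qed
  consider (r) "p \<le> a" | (m) "p - (H - 1) / 8 \<le> a" "a < p" | (l) "a < p - (H - 1) / 8" by linarith
  then show ?thesis
  proof cases
    case r
    have "integral {a..b} (bphi H p N) \<le> integral {a..b} (\<lambda>_. bphi H p N a)"
    proof (rule integral_le[OF bphi_int])
      fix s assume s: "s \<in> {a..b}"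
      have "bd p N a \<le> bd p N s" using r s unfolding bd_def by (auto simp: max_def)
      then show "bphi H p N s \<le> bphi H p N a" using bphi_anti H1 by simp
    qed (intro integrable_continuous_interval continuous_on_const)
    also have "\<dots> = (b - a) * bphi H p N a" using ab by simp
    also have "\<dots> \<le> 20 * N * (b - a) * bphi H p N a" using Cb bphi_ge1[of H p N a] by simp
    finally show ?thesis .
  next
    case m then show ?thesis using LB_mid[OF N1 H1 lnH m ab] by blast
  next
    case l
    define L where "L = p - (H - 1) / 8"
    have pa: "bphi H p N a = 1" using l bphi_one_left by simp
    show ?thesis
    proof (cases "b \<le> L")
      case True
      have "integral {a..b} (bphi H p N) = integral {a..b} (\<lambda>_. 1)"
        by (rule integral_cong) (use True L_def bphi_one_left in auto)
      then show ?thesis using ab Cb[of 1] pa by simp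
    next
      case False
      have aL: "a < L" using l L_def by simp
      have "integral {a..L} (bphi H p N) + integral {L..b} (bphi H p N) = integral {a..b} (bphi H p N)"
        using aL False by (intro Henstock_Kurzweil_Integration.integral_combine bphi_int) auto
      moreover have "integral {a..L} (bphi H p N) = L - a"
      proof -
        have "integral {a..L} (bphi H p N) = integral {a..L} (\<lambda>_. 1)"
          by (rule integral_cong) (use L_def bphi_one_left in auto)
        then show ?thesis using aL by simp
      qed
      moreover have "integral {L..b} (bphi H p N) \<le> 20 * N * (b - L) * bphi H p N L"
      proof -
        have "L < p" using H1' L_def by simp
        then show ?thesis using LB_mid[OF N1 H1 lnH _ \<open>L < p\<close>] False L_def by simp
      qed
      moreover have "bphi H p N L = 1" using bphi_one_left L_def by simp
      moreover have "L - a \<le> 20 * N * (L - a)" using aL C1 by simp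
      ultimately show ?thesis using pa by (simp add: algebra_simps)
    qed
  qed
qed

lemma integral_reflect_shift:
  fixes f :: "real \<Rightarrow> real"
  assumes "continuous_on UNIV f"
  shows "integral {a..b} (\<lambda>s. f (c - s)) = integral {c - b..c - a} f"
proof -
  define g where "g = f \<circ> ((+) c)"
  have "integral {a..b} (\<lambda>s. g (- s)) = integral {-b..-a} g"
    using Henstock_Kurzweil_Integration.integral_reflect_real[of "-a" "-b" g] by simp
  moreover have "(\<lambda>s. g (- s)) = (\<lambda>s. f (c - s))" unfolding g_def by auto
  moreover have "integral {-b..-a} g = integral {c - b..c - a} f"
  proof -
    have "f integrable_on {-b + c..-a + c}"
      by (rule integrable_continuous_interval) (use assms continuous_on_subset in blast)
    then have "(f has_integral integral {-b + c..-a + c} f) {-b + c..-a + c}" by blast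
    then have "(g has_integral integral {-b + c..-a + c} f) {-b..-a}"
      unfolding g_def by (subst has_integral_shift_Icc_real) 
    then show ?thesis by (simp add: integral_unique algebra_simps)
  qed
  ultimately show ?thesis by simp
qed

lemma RB_all:
  assumes N1: "1 \<le> N" and H1': "1 < H" and lnH: "ln H \<le> 4 * N" and ab: "a < b"
  shows "integral {a..b} (bphi H p N) \<le> 20 * N * (b - a) * bphi H p N b"
proof -
  have H1: "1 \<le> H" using H1' by simp
  have "integral {a..b} (bphi H p N) = integral {a..b} (\<lambda>s. bphi H p N (2*p + N - s))"
    by (simp add: bphi_symm)
  also have "\<dots> = integral {2*p + N - b..2*p + N - a} (bphi H p N)"
    by (rule integral_reflect_shift[OF bphi_cont])
  also have "\<dots> \<le> 20 * N * ((2*p + N - a) - (2*p + N - b)) * bphi H p N (2*p + N - b)"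
    using ab by (intro LB_all N1 H1' lnH) simp
  also have "\<dots> = 20 * N * (b - a) * bphi H p N b" by (simp add: bphi_symm)
  finally show ?thesis .
qed

lemma bump_A1:
  assumes N1: "1 \<le> N" and H1': "1 < H" and lnH: "ln H \<le> 4 * N" and ab: "a < b"
    and x: "a \<le> x" "x \<le> b"
  shows "integral {a..b} (bphi H p N) \<le> 20 * N * (b - a) * bphi H p N x"
proof -
  have H1: "1 \<le> H" using H1' by simp
  have C0: "0 \<le> 20 * N * (b - a)" using N1 ab by simp
  have "min (bphi H p N a) (bphi H p N b) \<le> bphi H p N x"
    using bphi_unimodal[OF x] N1 H1 by simp
  then have "20 * N * (b - a) * min (bphi H p N a) (bphi H p N b) \<le> 20 * N * (b - a) * bphi H p N x"
    using C0 by (intro mult_left_mono) auto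
  moreover have "integral {a..b} (bphi H p N) \<le> 20 * N * (b - a) * min (bphi H p N a) (bphi H p N b)"
    using LB_all[OF N1 H1' lnH ab] RB_all[OF N1 H1' lnH ab] by (simp add: min_def)
  ultimately show ?thesis by linarith
qed



definition pk :: "nat \<Rightarrow> nat \<Rightarrow> real" where "pk N k = real N * 4 ^ k"
definition UU :: "nat \<Rightarrow> nat \<Rightarrow> real \<Rightarrow> real" where
  "UU N k y = bphi (2 * pk N k) (pk N k) (real N) y - 1"
definition WW :: "nat \<Rightarrow> real \<Rightarrow> real" where
  "WW N y = 1 + (\<Sum>k\<in>{1..N}. UU N k y)"

lemma UU_nonneg: "0 \<le> UU N k y" using bphi_ge1 by (simp add: UU_def)

lemma UU_cont: "continuous_on S (UU N k)"
  unfolding UU_def by (intro continuous_intros bphi_cont)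

lemma WW_cont: "continuous_on S (WW N)"
  unfolding WW_def by (intro continuous_intros UU_cont)

lemma UU_int: "UU N k integrable_on {a..b}"
  by (rule integrable_continuous_interval[OF UU_cont])

lemma WW_int: "WW N integrable_on {a..b}"
  by (rule integrable_continuous_interval[OF WW_cont])

lemma WW_ge1: "1 \<le> WW N y"
  unfolding WW_def using UU_nonneg by (simp add: sum_nonneg)

lemma WW_ge_bphi:
  assumes "k \<in> {1..N}"
  shows "bphi (2 * pk N k) (pk N k) (real N) y \<le> WW N y"
proof -
  have "UU N k y \<le> (\<Sum>k\<in>{1..N}. UU N k y)"
    using assms UU_nonneg by (intro member_le_sum) auto
  then show ?thesis unfolding WW_def UU_def by simp
qed

lemma pk_pos: "1 \<le> N \<Longrightarrow> 0 < pk N k" by (simp add: pk_def)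

lemma pk_ge: "1 \<le> k \<Longrightarrow> 4 * real N \<le> pk N k"
proof -
  assume "1 \<le> k"
  then have "(4::real) ^ 1 \<le> 4 ^ k" by (intro power_increasing) auto
  then have "real N * 4 \<le> real N * 4 ^ k" by (intro mult_left_mono) auto
  then show ?thesis unfolding pk_def by (simp add: mult.commute)
qed

lemma UU_zero:
  assumes "1 \<le> k" "y < 3 * pk N k / 4 \<or> 3 * pk N k / 2 < y"
  shows "UU N k y = 0"
proof -
  have p4: "4 * real N \<le> pk N k" using pk_ge assms by simp
  from assms(2) show ?thesis
  proof
    assume "y < 3 * pk N k / 4"
    then have "y \<le> pk N k - (2 * pk N k - 1) / 8" by (simp add: field_simps)
    then show ?thesis unfolding UU_def using bphi_one_left by simp
  next
    assume "3 * pk N k / 2 < y"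
    then have "pk N k + real N + (2 * pk N k - 1) / 8 \<le> y" using p4 by (simp add: field_simps)
    then show ?thesis unfolding UU_def using bphi_one_right by simp
  qed
qed

lemma lnH_bound:
  assumes "1 \<le> N" "k \<le> N"
  shows "ln (2 * pk N k) \<le> 4 * real N"
proof -
  have "ln (2 * pk N k) = ln 2 + ln (real N) + real k * ln 4"
    using assms by (simp add: pk_def ln_mult ln_realpow)
  moreover have "ln (4::real) = 2 * ln 2"
    using ln_realpow[of 2 2] by simp
  moreover have "ln (real N) \<le> real N - 1" using assms by (intro ln_le_minus_one) auto
  moreover have "ln (2::real) < 1" by (rule ln_2_less_1)
  moreover have "0 \<le> ln (2::real)" by simp
  moreover have "real k * ln 2 \<le> real N * 1" using assms \<open>ln 2 < 1\<close> \<open>0 \<le> ln 2\<close>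
    by (intro mult_mono) auto
  ultimately show ?thesis by simp
qed

lemma UU_A1:
  assumes "1 \<le> N" "k \<in> {1..N}" "a < b" "a \<le> x" "x \<le> b"
  shows "integral {a..b} (UU N k) \<le> 20 * real N * (b - a) * WW N x"
proof -
  have H: "1 < 2 * pk N k" using pk_ge[of k N] assms by simp
  have "integral {a..b} (UU N k) \<le> integral {a..b} (bphi (2 * pk N k) (pk N k) (real N))"
    by (rule integral_le[OF UU_int bphi_int]) (simp add: UU_def)
  also have "\<dots> \<le> 20 * real N * (b - a) * bphi (2 * pk N k) (pk N k) (real N) x"
    using assms lnH_bound[of N k] H by (intro bump_A1) auto
  also have "\<dots> \<le> 20 * real N * (b - a) * WW N x"
    using WW_ge_bphi[OF assms(2)] assms by (intro mult_left_mono) auto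
  finally show ?thesis .
qed

lemma UU_mass:
  assumes "1 \<le> N" "k \<in> {1..N}"
  shows "integral {a..b} (UU N k) \<le> 15 * real N * pk N k"
proof -
  define c where "c = 3 * pk N k / 4"
  define d where "d = 3 * pk N k / 2"
  have p0: "0 < pk N k" using pk_pos assms by simp
  have cd: "c < d" using p0 c_def d_def by simp
  have hc: "(UU N k has_integral integral {c..d} (UU N k)) {c..d}" using UU_int by blast
  have hU: "(UU N k has_integral integral {c..d} (UU N k)) UNIV"
    by (rule has_integral_on_superset[OF hc]) (use UU_zero assms c_def d_def in auto)
  have "integral {a..b} (UU N k) \<le> integral UNIV (UU N k)"
    using hU UU_nonneg by (intro integral_subset_le UU_int) auto
  also have "\<dots> = integral {c..d} (UU N k)" using hU by (rule integral_unique)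
  also have "\<dots> \<le> integral {c..d} (bphi (2 * pk N k) (pk N k) (real N))"
    by (rule integral_le[OF UU_int bphi_int]) (simp add: UU_def)
  also have "\<dots> \<le> 20 * real N * (d - c) * bphi (2 * pk N k) (pk N k) (real N) c"
    using assms lnH_bound[of N k] pk_ge[of k N] cd by (intro LB_all) auto
  also have "bphi (2 * pk N k) (pk N k) (real N) c = 1"
  proof -
    have "c \<le> pk N k - (2 * pk N k - 1) / 8" by (simp add: c_def field_simps)
    then show ?thesis using bphi_one_left by simp
  qed
  also have "20 * real N * (d - c) * 1 = 15 * real N * pk N k" unfolding c_def d_def by simp
  finally show ?thesis .
qed

lemma geom4: "(\<Sum>k\<le>m. (4::real) ^ k) * 3 = 4 ^ Suc m - 1"
  by (induction m) (auto simp: algebra_simps)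

lemma geom_sum_bound:
  assumes "finite S" "\<And>k. k \<in> S \<Longrightarrow> pk N k \<le> Y" "0 \<le> Y"
  shows "(\<Sum>k\<in>S. pk N k) \<le> 4 / 3 * Y"
proof (cases "S = {}")
  case True then show ?thesis using assms by simp
next
  case False
  define m where "m = Max S"
  have mS: "m \<in> S" using False assms m_def by simp
  have sub: "S \<subseteq> {..m}" using assms m_def by auto
  have e: "(\<Sum>k\<in>S. pk N k) = real N * (\<Sum>k\<in>S. (4::real) ^ k)"
    by (simp add: pk_def sum_distrib_left)
  have s1: "(\<Sum>k\<in>S. (4::real) ^ k) \<le> (\<Sum>k\<le>m. (4::real) ^ k)"
    by (rule sum_mono2[OF _ sub]) auto
  have s2: "(\<Sum>k\<le>m. (4::real) ^ k) = (4 ^ Suc m - 1) / 3"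
    using geom4[of m] by simp
  have "real N * (\<Sum>k\<in>S. (4::real) ^ k) \<le> real N * ((4 ^ Suc m - 1) / 3)"
    using s1 s2 by (intro mult_left_mono) auto
  also have "real N * ((4 ^ Suc m - 1) / 3) \<le> 4 / 3 * pk N m"
    by (simp add: pk_def field_simps)
  also have "\<dots> \<le> 4 / 3 * Y" using assms(2)[OF mS] by simp
  finally show ?thesis using e by simp
qed

lemma pk_step: "k < k' \<Longrightarrow> 4 * pk N k \<le> pk N k'"
proof -
  assume "k < k'"
  then have "(4::real) ^ Suc k \<le> 4 ^ k'" by (intro power_increasing) auto
  then have "real N * 4 ^ Suc k \<le> real N * 4 ^ k'" by (intro mult_left_mono) auto
  then show ?thesis unfolding pk_def by (simp add: algebra_simps)
qed

lemma WW_A1: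
  assumes N1: "1 \<le> N" and ab: "a < b" and x: "a \<le> x" "x \<le> b"
  shows "integral {a..b} (WW N) \<le> 35 * real N * (b - a) * WW N x"
proof -
  define I where "I k = integral {a..b} (UU N k)" for k
  have int_eq: "integral {a..b} (WW N) = (b - a) + (\<Sum>k\<in>{1..N}. I k)"
  proof -
    have "integral {a..b} (WW N) = integral {a..b} (\<lambda>y. 1) + integral {a..b} (\<lambda>y. \<Sum>k\<in>{1..N}. UU N k y)"
      unfolding WW_def
      by (rule integral_add) (auto intro!: integrable_continuous_interval continuous_intros UU_cont)
    also have "integral {a..b} (\<lambda>y. \<Sum>k\<in>{1..N}. UU N k y) = (\<Sum>k\<in>{1..N}. I k)"
      unfolding I_def by (rule integral_sum) (auto intro: UU_int)
    finally show ?thesis using ab by simp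
  qed
  define K' where "K' = {k\<in>{1..N}. 2 * a / 3 \<le> pk N k \<and> pk N k \<le> 4 * b / 3}"
  define Ks where "Ks = {k\<in>K'. pk N k \<le> 2 * (b - a) / 3}"
  define Kb where "Kb = K' - Ks"
  have finK: "finite K'" unfolding K'_def by simp
  have zero: "I k = 0" if "k \<in> {1..N} - K'" for k
  proof -
    have k1: "1 \<le> k" using that by simp
    have "integral {a..b} (UU N k) = integral {a..b} (\<lambda>_. 0)"
    proof (rule integral_cong)
      fix y assume y: "y \<in> {a..b}"
      from that have "pk N k < 2 * a / 3 \<or> 4 * b / 3 < pk N k" unfolding K'_def by auto
      then have "y < 3 * pk N k / 4 \<or> 3 * pk N k / 2 < y" using y by auto
      then show "UU N k y = 0" using UU_zero k1 by blast
    qed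
    then show ?thesis unfolding I_def by simp
  qed
  have "(\<Sum>k\<in>{1..N}. I k) = (\<Sum>k\<in>K'. I k)"
    using zero by (intro sum.mono_neutral_right) (auto simp: K'_def)
  also have "\<dots> = (\<Sum>k\<in>Kb. I k) + (\<Sum>k\<in>Ks. I k)"
    unfolding Kb_def by (rule sum.subset_diff) (auto simp: Ks_def finK)
  finally have sumsplit: "(\<Sum>k\<in>{1..N}. I k) = (\<Sum>k\<in>Kb. I k) + (\<Sum>k\<in>Ks. I k)" .
  have small: "(\<Sum>k\<in>Ks. I k) \<le> 40 / 3 * real N * (b - a)"
  proof -
    have "(\<Sum>k\<in>Ks. I k) \<le> (\<Sum>k\<in>Ks. 15 * real N * pk N k)"
      unfolding I_def by (intro sum_mono UU_mass N1) (auto simp: Ks_def K'_def)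
    also have "\<dots> = 15 * real N * (\<Sum>k\<in>Ks. pk N k)" by (simp add: sum_distrib_left)
    also have "(\<Sum>k\<in>Ks. pk N k) \<le> 4 / 3 * (2 * (b - a) / 3)"
      using ab finK by (intro geom_sum_bound) (auto simp: Ks_def)
    then have "15 * real N * (\<Sum>k\<in>Ks. pk N k) \<le> 15 * real N * (4 / 3 * (2 * (b - a) / 3))"
      by (intro mult_left_mono) auto
    finally have f: "(\<Sum>k\<in>Ks. I k) \<le> 15 * real N * (4 / 3 * (2 * (b - a) / 3))" .
    have eq: "15 * real N * (4 / 3 * (2 * (b - a) / 3)) = 40 / 3 * real N * (b - a)"
      by (simp add: algebra_simps)
    show ?thesis using f unfolding eq .
  qed
  have uniq: "k = k'" if "k \<in> Kb" "k' \<in> Kb" for k k'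
  proof (rule ccontr)
    have gen: False if "k \<in> Kb" "k' \<in> Kb" "k < k'" for k k'
    proof -
      have "4 * pk N k \<le> pk N k'" using pk_step that(3) .
      moreover have "pk N k' \<le> 4 * b / 3" "2 * a / 3 \<le> pk N k" "\<not> pk N k \<le> 2 * (b - a) / 3"
        using that unfolding Kb_def Ks_def K'_def by auto
      ultimately show False by (simp add: field_simps)
    qed
    assume "k \<noteq> k'"
    then show False using gen that by (metis linorder_neqE_nat)
  qed
  have big: "(\<Sum>k\<in>Kb. I k) \<le> 20 * real N * (b - a) * WW N x"
  proof (cases "Kb = {}")
    case True
    then show ?thesis using N1 ab WW_ge1[of N x] by simp
  next
    case False
    then obtain k0 where k0: "k0 \<in> Kb" by auto
    then have "Kb = {k0}" using uniq by auto
    moreover have "k0 \<in> {1..N}" using k0 unfolding Kb_def K'_def by auto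
    ultimately show ?thesis unfolding I_def using UU_A1[OF N1 _ ab x] by simp
  qed
  have W1: "1 \<le> WW N x" by (rule WW_ge1)
  have "(b - a) * (1 + 40 / 3 * real N) \<le> (b - a) * (15 * real N * WW N x)"
  proof (rule mult_left_mono)
    have a1: "15 * real N * 1 \<le> 15 * real N * WW N x" using W1 by (intro mult_left_mono) auto
    have a2: "1 + 40 / 3 * real N \<le> 15 * real N" using N1 by (simp add: field_simps)
    show "1 + 40 / 3 * real N \<le> 15 * real N * WW N x" using a1 a2 by linarith
  qed (use ab in simp)
  then have e4: "(b - a) + 40 / 3 * (real N * (b - a)) \<le> 15 * (real N * (b - a) * WW N x)"
    by (simp add: algebra_simps)
  have e2: "(\<Sum>k\<in>Ks. I k) \<le> 40 / 3 * (real N * (b - a))" using small by (simp add: algebra_simps)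
  have e3: "(\<Sum>k\<in>Kb. I k) \<le> 20 * (real N * (b - a) * WW N x)" using big by (simp add: algebra_simps)
  have "integral {a..b} (WW N) \<le> 35 * (real N * (b - a) * WW N x)"
    using int_eq sumsplit e2 e3 e4 by linarith
  then show ?thesis by (simp add: algebra_simps)
qed

lemma WW_set_int: "set_integrable lborel {a..b} (WW N)"
  by (rule borel_integrable_atLeastAtMost'[OF WW_cont])

lemma WW_LINT: "(LINT x:{a..b}|lborel. WW N x) = integral {a..b} (WW N)"
  by (rule set_borel_integral_eq_integral(2)[OF WW_set_int])

lemma WW_A1_bound:
  assumes N1: "1 \<le> N"
  shows "A1_bound (WW N) (35 * real N)"
  unfolding A1_bound_def
proof (intro allI impI conjI)
  fix a b :: real assume ab: "a < b"
  show "set_integrable lborel {a..b} (WW N)" by (rule WW_set_int)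
  show "AE x in lborel. x \<in> {a..b} \<longrightarrow>
          1 / (b - a) * (LINT x:{a..b}|lborel. WW N x) \<le> 35 * real N * WW N x"
  proof (rule AE_I2, rule impI)
    fix x assume x: "x \<in> {a..b}"
    have "integral {a..b} (WW N) \<le> 35 * real N * (b - a) * WW N x"
      using WW_A1[OF N1 ab] x by simp
    then have "integral {a..b} (WW N) / (b - a) \<le> 35 * real N * WW N x"
      using ab by (simp add: divide_le_eq algebra_simps)
    then show "1 / (b - a) * (LINT x:{a..b}|lborel. WW N x) \<le> 35 * real N * WW N x"
      unfolding WW_LINT by simp
  qed
qed

lemma WW_zero_one:
  assumes N1: "1 \<le> N" and y: "y \<le> 1"
  shows "WW N y = 1"
proof -
  have "UU N k y = 0" if "k \<in> {1..N}" for k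
  proof (rule UU_zero)
    show "1 \<le> k" using that by simp
    have "4 * real N \<le> pk N k" using pk_ge that by simp
    then show "y < 3 * pk N k / 4 \<or> 3 * pk N k / 2 < y" using N1 y by simp
  qed
  then show ?thesis unfolding WW_def by simp
qed

lemma WW_plateau:
  assumes N1: "1 \<le> N" and k: "k \<in> {1..N}" and y: "pk N k \<le> y" "y \<le> pk N k + real N"
  shows "2 * pk N k \<le> WW N y"
proof -
  have "bphi (2 * pk N k) (pk N k) (real N) y = 2 * pk N k"
    using y pk_ge[of k N] k N1 by (intro bphi_mid_val) auto
  then show ?thesis using WW_ge_bphi[OF k, of y] by simp
qed

lemma WW_lower:
  assumes N1: "1 \<le> N" and A: "A1_bound (WW N) C"
  shows "real N \<le> C"
proof (rule ccontr)
  assume CN: "\<not> real N \<le> C"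
  define b where "b = 5 * real N"
  have b0: "0 < b" using N1 b_def by simp
  from A have ae: "AE x in lborel. x \<in> {0..b} \<longrightarrow>
        1 / (b - 0) * (LINT x:{0..b}|lborel. WW N x) \<le> C * WW N x"
    unfolding A1_bound_def using b0 by blast
  have p1: "pk N 1 = 4 * real N" by (simp add: pk_def)
  have "integral {4 * real N..b} (WW N) \<le> integral {0..b} (WW N)"
    using WW_ge1 order_trans[OF zero_le_one] N1 b_def
    by (intro integral_subset_le WW_int) (auto intro: order_trans[OF zero_le_one WW_ge1])
  moreover have "integral {4 * real N..b} (\<lambda>_. 8 * real N) \<le> integral {4 * real N..b} (WW N)"
  proof (rule integral_le)
    fix y assume "y \<in> {4 * real N..b}"
    then show "8 * real N \<le> WW N y"
      using WW_plateau[OF N1, of 1 y] N1 p1 b_def by simp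
  qed (auto intro: WW_int)
  moreover have "integral {4 * real N..b} (\<lambda>_. 8 * real N) = 8 * real N * real N"
    using b_def by simp
  ultimately have big: "8 * real N * real N \<le> integral {0..b} (WW N)" by linarith
  have avg: "C < 1 / (b - 0) * (LINT x:{0..b}|lborel. WW N x)"
  proof -
    have "C * b < real N * b" using CN b0 by simp
    also have "real N * b \<le> integral {0..b} (WW N)"
    proof -
      have "real N * b = 5 * (real N * real N)" "8 * real N * real N = 8 * (real N * real N)"
        using b_def by simp_all
      moreover have "0 \<le> real N * real N" by simp
      ultimately show ?thesis using big by linarith
    qed
    finally show ?thesis unfolding WW_LINT using b0 by (simp add: field_simps)
  qed
  from ae obtain Z where Z: "{x \<in> space lborel. \<not> (x \<in> {0..b} \<longrightarrow>
        1 / (b - 0) * (LINT x:{0..b}|lborel. WW N x) \<le> C * WW N x)} \<subseteq> Z"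
      "emeasure lborel Z = 0" "Z \<in> sets lborel"
    by (rule AE_E)
  have "{0..1} \<subseteq> Z"
  proof
    fix x :: real assume x: "x \<in> {0..1}"
    then have "WW N x = 1" using WW_zero_one[OF N1] by simp
    moreover have "x \<in> {0..b}" using x b_def N1 by simp
    ultimately show "x \<in> Z" using Z(1) avg by auto
  qed
  then have "emeasure lborel {0..1::real} \<le> emeasure lborel Z" using Z(3) by (rule emeasure_mono)
  then show False using Z(2) by simp
qed

lemma pk_geN: "real N \<le> pk N k"
proof -
  have "real N * 1 \<le> real N * 4 ^ k" by (intro mult_left_mono) auto
  then show ?thesis by (simp add: pk_def)
qed

lemma WW_measure:
  assumes N1: "1 \<le> N"
  shows "ennreal (real N ^ 2) \<le> emeasure lborel {x. 1 < x \<and> WW N x > x}"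
proof -
  define F where "F k = {pk N k..pk N k + real N}" for k
  have disj: "disjoint_family_on F {1..N}"
    unfolding disjoint_family_on_def
  proof (intro ballI impI)
    fix k k' assume kk: "k \<in> {1..N}" "k' \<in> {1..N}" "k \<noteq> k'"
    have gen: "F k \<inter> F k' = {}" if "k < k'" for k k'
    proof -
      have "4 * pk N k \<le> pk N k'" using pk_step that .
      moreover have "real N \<le> pk N k" by (rule pk_geN)
      ultimately have "pk N k + real N < pk N k'" using N1 by simp
      then show ?thesis unfolding F_def by auto
    qed
    show "F k \<inter> F k' = {}"
      using kk(3) gen[of k k'] gen[of k' k] by (metis inf_commute linorder_neqE_nat)
  qed
  have sub: "(\<Union>k\<in>{1..N}. F k) \<subseteq> {x. 1 < x \<and> WW N x > x}"
  proof
    fix y assume "y \<in> (\<Union>k\<in>{1..N}. F k)"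
    then obtain k where k: "k \<in> {1..N}" and y: "pk N k \<le> y" "y \<le> pk N k + real N"
      unfolding F_def by auto
    have p4: "4 * real N \<le> pk N k" using pk_ge[of k N] k by simp
    have "2 * pk N k \<le> WW N y" using WW_plateau[OF N1 k y] .
    then show "y \<in> {x. 1 < x \<and> WW N x > x}" using y p4 N1 by simp
  qed
  have meas: "{x. 1 < x \<and> WW N x > x} \<in> sets lborel"
  proof -
    have "open {x::real. 1 < x}" by (simp add: open_Collect_less)
    moreover have "open {x. x < WW N x}"
      by (rule open_Collect_less) (auto intro: continuous_intros WW_cont)
    ultimately have "open ({x::real. 1 < x} \<inter> {x. x < WW N x})" by auto
    moreover have "{x. 1 < x \<and> WW N x > x} = {x::real. 1 < x} \<inter> {x. x < WW N x}" by auto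
    ultimately show ?thesis by simp
  qed
  have "emeasure lborel (\<Union>k\<in>{1..N}. F k) = (\<Sum>k\<in>{1..N}. emeasure lborel (F k))"
  proof -
    have "F ` {1..N} \<subseteq> sets lborel" by (auto simp: F_def)
    then show ?thesis using disj by (intro sum_emeasure[symmetric]) auto
  qed
  also have "\<dots> = (\<Sum>k\<in>{1..N}. ennreal (real N))" unfolding F_def by simp
  also have "\<dots> = ennreal (real N ^ 2)"
    by (simp add: power2_eq_square ennreal_mult' ennreal_of_nat_eq_real_of_nat)
  finally have "ennreal (real N ^ 2) = emeasure lborel (\<Union>k\<in>{1..N}. F k)" by simp
  also have "\<dots> \<le> emeasure lborel {x. 1 < x \<and> WW N x > x}"
    by (rule emeasure_mono[OF sub meas])
  finally show ?thesis .
qed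

theorem theorem2p2:
  shows "\<exists>c1 c2 c3 :: real. 0 < c1 \<and> c1 \<le> c2 \<and> 0 < c3 \<and>
    (\<forall>N :: nat. N > 20 \<longrightarrow>
      (\<exists>w :: real \<Rightarrow> real. A1_weight w \<and>
         (LINT x:{0..1}|lborel. w x) = 1 \<and>
         c1 * real N \<le> A1_const w \<and> A1_const w \<le> c2 * real N \<and>
         emeasure lborel {x. 1 < x \<and> w x > x} \<ge> ennreal (c3 * (real N)^2)))"
proof -
  have main: "\<forall>N :: nat. N > 20 \<longrightarrow>
      (\<exists>w :: real \<Rightarrow> real. A1_weight w \<and>
         (LINT x:{0..1}|lborel. w x) = 1 \<and>
         1 * real N \<le> A1_const w \<and> A1_const w \<le> 35 * real N \<and>
         emeasure lborel {x. 1 < x \<and> w x > x} \<ge> ennreal (1 * (real N)^2))"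
  proof (intro allI impI)
  fix N :: nat assume N20: "N > 20"
  then have N1: "1 \<le> N" by simp
  define S where "S = {C. C > 0 \<and> A1_bound (WW N) C}"
  have inS: "35 * real N \<in> S" unfolding S_def using WW_A1_bound[OF N1] N1 by simp
  have bdd: "bdd_below S" unfolding S_def by (rule bdd_belowI[of _ 0]) auto
  have up: "A1_const (WW N) \<le> 35 * real N"
    unfolding A1_const_def S_def[symmetric] by (rule cInf_lower[OF inS bdd])
  have low: "real N \<le> A1_const (WW N)"
    unfolding A1_const_def S_def[symmetric]
  proof (rule cInf_greatest)
    show "S \<noteq> {}" using inS by auto
    fix x assume "x \<in> S" then show "real N \<le> x" using WW_lower[OF N1] unfolding S_def by auto
  qed
  have wt: "A1_weight (WW N)"
    unfolding A1_weight_def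
  proof (intro conjI allI)
    show "WW N \<in> borel_measurable lborel"
      using WW_cont[of UNIV N] by (simp add: borel_measurable_continuous_onI)
    fix x show "0 \<le> WW N x" using WW_ge1[of N x] by simp
  next
    show "\<exists>C>0. A1_bound (WW N) C" using inS unfolding S_def by (intro exI[of _ "35 * real N"]) auto
  qed
  have int1: "(LINT x:{0..1}|lborel. WW N x) = 1"
  proof -
    have "integral {0..1} (WW N) = integral {0..1::real} (\<lambda>_. 1::real)"
    proof (rule integral_cong)
      fix x :: real assume "x \<in> {0..1}"
      then show "WW N x = 1" using WW_zero_one[OF N1] by simp
    qed
    then show ?thesis unfolding WW_LINT by simp
  qed
  show "\<exists>w :: real \<Rightarrow> real. A1_weight w \<and>
         (LINT x:{0..1}|lborel. w x) = 1 \<and>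
         1 * real N \<le> A1_const w \<and> A1_const w \<le> 35 * real N \<and>
         emeasure lborel {x. 1 < x \<and> w x > x} \<ge> ennreal (1 * (real N)^2)"
    using wt int1 low up WW_measure[OF N1] by (intro exI[of _ "WW N"]) simp
  qed
  show ?thesis
    by (rule exI[of _ "1::real"], rule exI[of _ "35::real"], rule exI[of _ "1::real"]) (use main in simp)
qed

end
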